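(* Let $\Sigma\subset\mathbb{R}^{n+1}$ be a pure, hereditary, $(n+1)$-dimensional fan with smoothness parameters $\alpha$. Then $H_{n+1}(\mathcal{R}/\mathcal{J}[\Sigma,\Sigma^{-1}])=C^\alpha(\Sigma)$.
   Context: $S=\mathbb{R}[x_0,\ldots,x_n]$. A cone is the positive hull of finitely many vectors, of dimension that of its linear span $\mathrm{aff}(\gamma)$; a fan is a finite set of cones closed under faces, any two meeting in a common face; $\Sigma_i$ = $i$-dim cones, facets = maximal cones; pure: all facets of dim $n+1$; hereditary: for every face $\psi$ the graph on facets containing $\psi$ with edges for pairs meeting in an $n$-face is connected; $\partial\Sigma$ = subfan of faces contained in an $n$-face lying in exactly one facet; others interior. $l_\tau$ generates the ideal of $\mathrm{aff}(\tau)$. Smoothness parameters: integers $\alpha(\tau)\ge-1$ ($\tau\in\Sigma_n$), $\ge0$ on interior $\tau$; $\Sigma^{-1}$ = subfan of $\partial\Sigma$ of cones contained in some $\tau$ with $\alpha(\tau)=-1$; $J(\tau)=\langle l_\tau^{\alpha(\tau)+1}\rangle$ for $\tau\in\Sigma_n\setminus\Sigma^{-1}_n$, $J(\gamma)=\sum_{\tau\in\Sigma_n\setminus\Sigma^{-1}_n,\gamma\subseteq\tau}J(\tau)$ for non-facets, $J(\sigma)=0$ for facets. With $u_\rho$ unit ray generators, $P(\gamma)=\mathrm{conv}(\{0\}\cup\{u_\rho:\rho\subseteq\gamma\})$, $\mathrm{lk}(\gamma)=\mathrm{conv}\{u_\rho\}$; $\mathcal{R}/\mathcal{J}[\Sigma,\Sigma^{-1}]_i=\bigoplus_{\gamma\in\Sigma_i\setminus\Sigma^{-1}_i}S/J(\gamma)$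 ($0\le i\le n+1$) with differential induced by the cellular boundary of the relative cellular chain complex of $(P(\Sigma),\mathrm{lk}(\Sigma)\cup P(\Sigma^{-1}))$ with $S$ coefficients. The spline module $C^\alpha(\Sigma)$ is the set of tuples $(F_\sigma)_{\sigma\in\Sigma_{n+1}}\in\bigoplus_{\sigma\in\Sigma_{n+1}}S$ such that $l_\tau^{\alpha(\tau)+1}\mid F_{\sigma_1}-F_{\sigma_2}$ whenever $\sigma_1\cap\sigma_2=\tau\in\Sigma_n$, and $l_\tau^{\alpha(\tau)+1}\mid F_\sigma$ whenever $\tau\in\Sigma_n\cap\partial\Sigma$ and $\tau\subseteq\sigma$. *)

theory Defs
  imports "HOL-Analysis.Analysis" "HOL-Library.Poly_Mapping"
begin

text \<open>Ambient space R^(n+1) is real^'d with CARD('d) = n+1.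
  The polynomial ring S = R[x_d : d in 'd] is ('d =>0 nat) =>0 real.\<close>

type_synonym 'd spoly = "('d \<Rightarrow>\<^sub>0 nat) \<Rightarrow>\<^sub>0 real"

definition pos_hull :: "('a::real_vector) set \<Rightarrow> 'a set" where
  "pos_hull V = {(\<Sum>v\<in>V. c v *\<^sub>R v) | c. \<forall>v\<in>V. 0 \<le> c v}"

definition is_cone :: "('a::real_vector) set \<Rightarrow> bool" where
  "is_cone \<gamma> \<longleftrightarrow> (\<exists>V. finite V \<and> \<gamma> = pos_hull V)"

text \<open>Dimension of a cone = dimension of its linear span (dim of a set in HOL-Analysis
  is the dimension of its span).\<close>

definition is_fan :: "('a::euclidean_space) set set \<Rightarrow> bool" where
  "is_fan \<Sigma> \<longleftrightarrow> finite \<Sigma> \<and> (\<forall>\<gamma>\<in>\<Sigma>. is_cone \<gamma>)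
     \<and> (\<forall>\<gamma>\<in>\<Sigma>. \<forall>\<delta>. \<delta> face_of \<gamma> \<and> \<delta> \<noteq> {} \<longrightarrow> \<delta> \<in> \<Sigma>)
     \<and> (\<forall>\<gamma>\<in>\<Sigma>. \<forall>\<delta>\<in>\<Sigma>. (\<gamma> \<inter> \<delta>) face_of \<gamma> \<and> (\<gamma> \<inter> \<delta>) face_of \<delta>)"

definition cones_dim :: "('a::euclidean_space) set set \<Rightarrow> nat \<Rightarrow> 'a set set" where
  "cones_dim \<Sigma> i = {\<gamma>\<in>\<Sigma>. dim \<gamma> = i}"

definition facets :: "'a set set \<Rightarrow> 'a set set" where
  "facets \<Sigma> = {\<sigma>\<in>\<Sigma>. \<forall>\<gamma>\<in>\<Sigma>. \<sigma> \<subseteq> \<gamma> \<longrightarrow> \<gamma> = \<sigma>}"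

definition pure_fan :: "(real^'d) set set \<Rightarrow> bool" where
  "pure_fan \<Sigma> \<longleftrightarrow> (\<forall>\<sigma>\<in>facets \<Sigma>. dim \<sigma> = CARD('d))"

definition codim1 :: "(real^'d) set set \<Rightarrow> (real^'d) set set" where
  "codim1 \<Sigma> = cones_dim \<Sigma> (CARD('d) - 1)"

definition hereditary :: "(real^'d) set set \<Rightarrow> bool" where
  "hereditary \<Sigma> \<longleftrightarrow> (\<forall>\<psi>\<in>\<Sigma>.
      let F = {\<sigma>\<in>facets \<Sigma>. \<psi> \<subseteq> \<sigma>};
          adj = (\<lambda>\<sigma>1 \<sigma>2. \<sigma>1 \<in> F \<and> \<sigma>2 \<in> F \<and> \<sigma>1 \<inter> \<sigma>2 \<in> codim1 \<Sigma>)
      in \<forall>\<sigma>1\<in>F. \<forall>\<sigma>2\<in>F. adj\<^sup>*\<^sup>* \<sigma>1 \<sigma>2)"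

definition bdry :: "(real^'d) set set \<Rightarrow> (real^'d) set set" where
  "bdry \<Sigma> = {\<gamma>\<in>\<Sigma>. \<exists>\<tau>\<in>codim1 \<Sigma>. card {\<sigma>\<in>facets \<Sigma>. \<tau> \<subseteq> \<sigma>} = 1 \<and> \<gamma> \<subseteq> \<tau>}"

definition smoothness_params :: "(real^'d) set set \<Rightarrow> ((real^'d) set \<Rightarrow> int) \<Rightarrow> bool" where
  "smoothness_params \<Sigma> \<alpha> \<longleftrightarrow>
     (\<forall>\<tau>\<in>codim1 \<Sigma>. \<alpha> \<tau> \<ge> -1) \<and> (\<forall>\<tau>\<in>codim1 \<Sigma> - bdry \<Sigma>. \<alpha> \<tau> \<ge> 0)"

definition sigma_neg :: "(real^'d) set set \<Rightarrow> ((real^'d) set \<Rightarrow> int) \<Rightarrow> (real^'d) set set" where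
  "sigma_neg \<Sigma> \<alpha> = {\<gamma>\<in>bdry \<Sigma>. \<exists>\<tau>\<in>codim1 \<Sigma>. \<alpha> \<tau> = -1 \<and> \<gamma> \<subseteq> \<tau>}"

text \<open>Linear form l_tau = sum_d a_d x_d with a a nonzero normal of the hyperplane aff(tau);
  it generates the ideal of aff(tau) (unique up to a nonzero scalar).\<close>
definition normal_of :: "(real^'d) set \<Rightarrow> real^'d" where
  "normal_of \<tau> = (SOME a. a \<noteq> 0 \<and> (\<forall>v\<in>\<tau>. a \<bullet> v = 0))"

definition lin_form :: "real^'d \<Rightarrow> 'd spoly" where
  "lin_form a = (\<Sum>d\<in>UNIV. Poly_Mapping.single (Poly_Mapping.single d 1) (a $ d))"

definition lform :: "(real^'d) set \<Rightarrow> 'd spoly" where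
  "lform \<tau> = lin_form (normal_of \<tau>)"

definition gen_pow :: "((real^'d) set \<Rightarrow> int) \<Rightarrow> (real^'d) set \<Rightarrow> 'd spoly" where
  "gen_pow \<alpha> \<tau> = lform \<tau> ^ nat (\<alpha> \<tau> + 1)"

definition Jideal :: "(real^'d) set set \<Rightarrow> ((real^'d) set \<Rightarrow> int) \<Rightarrow> (real^'d) set \<Rightarrow> 'd spoly set" where
  "Jideal \<Sigma> \<alpha> \<gamma> =
    (if \<gamma> \<in> facets \<Sigma> then {0}
     else {(\<Sum>\<tau>\<in>{\<tau>\<in>codim1 \<Sigma> - sigma_neg \<Sigma> \<alpha>. \<gamma> \<subseteq> \<tau>}. q \<tau> * gen_pow \<alpha> \<tau>) | q. True})"

text \<open>Incidence number [P(sigma):P(delta)] of the cellular boundary, for sigma of dimension n+1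
  oriented by the standard orientation of R^(n+1), and delta of dimension n oriented so that
  (normal_of delta, oriented basis of delta) is positively oriented: it is +1 if normal_of delta
  points out of sigma, -1 if it points into sigma, 0 if delta is not a face of sigma.\<close>
definition incidence :: "(real^'d) set \<Rightarrow> (real^'d) set \<Rightarrow> int" where
  "incidence \<sigma> \<delta> =
     (if \<delta> \<subseteq> \<sigma> then (if (\<forall>x\<in>\<sigma>. normal_of \<delta> \<bullet> x \<le> 0) then 1 else -1) else 0)"

text \<open>Top chain module (degree n+1) of R/J[Sigma,Sigma^-1]: direct sum of S/J(sigma) = S over
  sigma in Sigma_(n+1) minus Sigma^-1, represented as functions vanishing off that index set.\<close>
definition top_chains :: "(real^'d) set set \<Rightarrow> ((real^'d) set \<Rightarrow> int) \<Rightarrow> ((real^'d) set \<Rightarrow> 'd spoly) set" where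
  "top_chains \<Sigma> \<alpha> = {F. \<forall>\<gamma>. \<gamma> \<notin> cones_dim \<Sigma> CARD('d) - sigma_neg \<Sigma> \<alpha> \<longrightarrow> F \<gamma> = 0}"

text \<open>Top differential, with values in the direct sum of S/J(delta) (delta in Sigma_n minus Sigma^-1),
  given by representatives.\<close>
definition d_top :: "(real^'d) set set \<Rightarrow> ((real^'d) set \<Rightarrow> int) \<Rightarrow> ((real^'d) set \<Rightarrow> 'd spoly) \<Rightarrow> (real^'d) set \<Rightarrow> 'd spoly" where
  "d_top \<Sigma> \<alpha> F \<delta> = (\<Sum>\<sigma>\<in>cones_dim \<Sigma> CARD('d) - sigma_neg \<Sigma> \<alpha>. of_int (incidence \<sigma> \<delta>) * F \<sigma>)"

text \<open>H_(n+1): since the complex has no term in degree n+2, it is the kernel of the top differential,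
  i.e. the chains whose image has every component zero in S/J(delta).\<close>
definition H_top :: "(real^'d) set set \<Rightarrow> ((real^'d) set \<Rightarrow> int) \<Rightarrow> ((real^'d) set \<Rightarrow> 'd spoly) set" where
  "H_top \<Sigma> \<alpha> = {F\<in>top_chains \<Sigma> \<alpha>.
       \<forall>\<delta>\<in>codim1 \<Sigma> - sigma_neg \<Sigma> \<alpha>. d_top \<Sigma> \<alpha> F \<delta> \<in> Jideal \<Sigma> \<alpha> \<delta>}"

definition spline_module :: "(real^'d) set set \<Rightarrow> ((real^'d) set \<Rightarrow> int) \<Rightarrow> ((real^'d) set \<Rightarrow> 'd spoly) set" where
  "spline_module \<Sigma> \<alpha> = {F.
      (\<forall>\<gamma>. \<gamma> \<notin> cones_dim \<Sigma> CARD('d) \<longrightarrow> F \<gamma> = 0)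
    \<and> (\<forall>\<sigma>1\<in>cones_dim \<Sigma> CARD('d). \<forall>\<sigma>2\<in>cones_dim \<Sigma> CARD('d). \<forall>\<tau>\<in>codim1 \<Sigma>.
          \<sigma>1 \<inter> \<sigma>2 = \<tau> \<longrightarrow> gen_pow \<alpha> \<tau> dvd (F \<sigma>1 - F \<sigma>2))
    \<and> (\<forall>\<sigma>\<in>cones_dim \<Sigma> CARD('d). \<forall>\<tau>\<in>codim1 \<Sigma> \<inter> bdry \<Sigma>.
          \<tau> \<subseteq> \<sigma> \<longrightarrow> gen_pow \<alpha> \<tau> dvd F \<sigma>)}"

end

theory Submission imports Defs begin

lemma pos_hull_eq: fixes V :: "'a::euclidean_space set" assumes "finite V"
  shows "pos_hull V = convex_cone hull V"
proof
  show "pos_hull V \<subseteq> convex_cone hull V"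
  proof
    fix x assume "x \<in> pos_hull V"
    then obtain c where x: "x = (\<Sum>v\<in>V. c v *\<^sub>R v)" and c: "\<forall>v\<in>V. 0 \<le> c v"
      unfolding pos_hull_def by blast
    have "\<forall>W. W \<subseteq> V \<longrightarrow> (\<Sum>v\<in>W. c v *\<^sub>R v) \<in> convex_cone hull V"
    proof (intro allI impI)
      fix W assume "W \<subseteq> V"
      then have "finite W" using assms finite_subset by blast
      then show "(\<Sum>v\<in>W. c v *\<^sub>R v) \<in> convex_cone hull V" using \<open>W \<subseteq> V\<close>
      proof (induction W rule: finite_induct)
        case empty then show ?case by (simp add: convex_cone_hull_contains_0)
        next
        case (insert w W)
        then show ?case
          by (simp add: convex_cone_hull_add convex_cone_hull_mul hull_inc c subsetD)
      qed
    qed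
    then show "x \<in> convex_cone hull V" using x by blast
  qed
next
  have sub: "V \<subseteq> pos_hull V"
  proof
    fix w assume "w \<in> V"
    have "(\<Sum>v\<in>V. (if v = w then 1 else 0) *\<^sub>R v) = (\<Sum>v\<in>V. if v = w then v else 0)"
      by (rule sum.cong) auto
    also have "\<dots> = w" using assms \<open>w \<in> V\<close> by (simp add: sum.delta)
    finally have "(\<Sum>v\<in>V. (if v = w then 1 else 0) *\<^sub>R v) = w" .
    then show "w \<in> pos_hull V" unfolding pos_hull_def
      by (intro CollectI exI[where x="\<lambda>v. if v = w then 1 else 0"]) auto
  qed
  have cc: "convex_cone (pos_hull V)"
    unfolding convex_cone_def
  proof (intro conjI)
    have "0 \<in> pos_hull V" unfolding pos_hull_def by (intro CollectI exI[where x="\<lambda>v. 0"]) auto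
    then show "pos_hull V \<noteq> {}" by blast
    show "conic (pos_hull V)" unfolding conic_def pos_hull_def
    proof (clarify)
      fix c :: real and d :: "'a \<Rightarrow> real" assume "0 \<le> c" "\<forall>v\<in>V. 0 \<le> d v"
      then show "\<exists>e. c *\<^sub>R (\<Sum>v\<in>V. d v *\<^sub>R v) = (\<Sum>v\<in>V. e v *\<^sub>R v) \<and> (\<forall>v\<in>V. 0 \<le> e v)"
        by (rule_tac x="\<lambda>v. c * d v" in exI) (simp add: scaleR_sum_right)
    qed
    show "convex (pos_hull V)" unfolding convex_def pos_hull_def
    proof (clarify)
      fix u w :: real and c d :: "'a \<Rightarrow> real" assume "0 \<le> u" "0 \<le> w" "\<forall>v\<in>V. 0 \<le> c v" "\<forall>v\<in>V. 0 \<le> d v"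
      then show "\<exists>e. u *\<^sub>R (\<Sum>v\<in>V. c v *\<^sub>R v) + w *\<^sub>R (\<Sum>v\<in>V. d v *\<^sub>R v) = (\<Sum>v\<in>V. e v *\<^sub>R v) \<and> (\<forall>v\<in>V. 0 \<le> e v)"
        by (rule_tac x="\<lambda>v. u * c v + w * d v" in exI)
           (simp add: scaleR_sum_right sum.distrib scaleR_add_left)
    qed
  qed
  show "convex_cone hull V \<subseteq> pos_hull V"
    using sub cc by (rule hull_minimal)
qed

lemma cone_polyhedron: "is_cone (\<gamma>::'a::euclidean_space set) \<Longrightarrow> polyhedron \<gamma>"
  unfolding is_cone_def using pos_hull_eq polyhedron_convex_cone_hull by metis

lemma cone_0: "is_cone (\<gamma>::'a::euclidean_space set) \<Longrightarrow> 0 \<in> \<gamma>"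
  unfolding is_cone_def using pos_hull_eq convex_cone_hull_contains_0 by metis

lemma aff_dim_0: "0 \<in> (X::'a::euclidean_space set) \<Longrightarrow> aff_dim X = int (dim X)"
  using aff_dim_eq_dim[of 0 X] by (simp add: hull_inc)

lemma fan_cone: "is_fan \<Sigma> \<Longrightarrow> \<gamma> \<in> \<Sigma> \<Longrightarrow> is_cone \<gamma>"
  unfolding is_fan_def by blast

lemma fan_same_dim:
  fixes \<Sigma> :: "('a::euclidean_space) set set"
  assumes "is_fan \<Sigma>" "\<gamma> \<in> \<Sigma>" "\<delta> \<in> \<Sigma>" "\<delta> \<subseteq> \<gamma>" "dim \<gamma> \<le> dim \<delta>"
  shows "\<delta> = \<gamma>"
proof (rule ccontr)
  assume ne: "\<delta> \<noteq> \<gamma>"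
  have "(\<delta> \<inter> \<gamma>) face_of \<gamma>" using assms(1-3) unfolding is_fan_def by blast
  then have f: "\<delta> face_of \<gamma>" using assms(4) by (simp add: Int_absorb2)
  have "convex \<gamma>" using assms(1,2) fan_cone cone_polyhedron polyhedron_imp_convex by blast
  then have "aff_dim \<delta> < aff_dim \<gamma>" using face_of_aff_dim_lt f ne by blast
  moreover have "0 \<in> \<delta>" "0 \<in> \<gamma>" using assms fan_cone cone_0 by blast+
  ultimately have "int (dim \<delta>) < int (dim \<gamma>)" using aff_dim_0 by metis
  then show False using assms(5) by linarith
qed

lemma facets_full:
  fixes \<Sigma> :: "(real^'d) set set"
  assumes "is_fan \<Sigma>" "pure_fan \<Sigma>"
  shows "facets \<Sigma> = cones_dim \<Sigma> CARD('d)"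
proof
  show "facets \<Sigma> \<subseteq> cones_dim \<Sigma> CARD('d)"
    using assms(2) unfolding pure_fan_def facets_def cones_dim_def by auto
  show "cones_dim \<Sigma> CARD('d) \<subseteq> facets \<Sigma>"
  proof
    fix \<sigma> assume s: "\<sigma> \<in> cones_dim \<Sigma> CARD('d)"
    have sS: "\<sigma> \<in> \<Sigma>" and sd: "dim \<sigma> = CARD('d)" using s unfolding cones_dim_def by auto
    have "\<gamma> = \<sigma>" if "\<gamma> \<in> \<Sigma>" "\<sigma> \<subseteq> \<gamma>" for \<gamma>
    proof -
      have "dim \<gamma> \<le> dim \<sigma>" using dim_subset_UNIV_cart[of \<gamma>] sd by simp
      then show ?thesis using fan_same_dim[OF assms(1) that(1) sS that(2)] by simp
    qed
    then show "\<sigma> \<in> facets \<Sigma>" using sS unfolding facets_def by blast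
  qed
qed

lemma normal_of_prop:
  fixes \<tau> :: "(real^'d) set"
  assumes "dim \<tau> < CARD('d)"
  shows "normal_of \<tau> \<noteq> 0 \<and> (\<forall>v\<in>\<tau>. normal_of \<tau> \<bullet> v = 0)"
proof -
  obtain x :: "real^'d" where "x \<noteq> 0" "\<And>y. y \<in> span \<tau> \<Longrightarrow> orthogonal x y"
    using orthogonal_to_subspace_exists[of \<tau>] assms by auto
  then have "\<exists>a. a \<noteq> 0 \<and> (\<forall>v\<in>\<tau>. a \<bullet> v = 0)"
    by (metis orthogonal_def span_base)
  then show ?thesis unfolding normal_of_def by (rule someI_ex)
qed

lemma hyperplane_span:
  fixes \<tau> :: "(real^'d) set" and a :: "real^'d"
  assumes "dim \<tau> = CARD('d) - 1" "a \<noteq> 0" "\<forall>v\<in>\<tau>. a \<bullet> v = 0"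
  shows "{x. a \<bullet> x = 0} = span \<tau>"
proof -
  have sub: "span \<tau> \<subseteq> {x. a \<bullet> x = 0}"
    by (rule span_minimal) (use assms(3) subspace_hyperplane in auto)
  have "dim {x. a \<bullet> x = 0} = CARD('d) - 1" using dim_hyperplane[OF assms(2)] by simp
  then show ?thesis
    using subspace_dim_equal[OF subspace_span subspace_hyperplane sub] assms(1) by simp
qed

lemma parallel_normal:
  fixes \<tau> :: "(real^'d) set" and a h :: "real^'d"
  assumes "dim \<tau> = CARD('d) - 1" "a \<noteq> 0" "\<forall>v\<in>\<tau>. a \<bullet> v = 0" "\<forall>v\<in>\<tau>. h \<bullet> v = 0"
  shows "h = ((h \<bullet> a) / (a \<bullet> a)) *\<^sub>R a"
proof -
  define k where "k = (h \<bullet> a) / (a \<bullet> a)"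
  define w where "w = h - k *\<^sub>R a"
  have aa: "a \<bullet> a \<noteq> 0" using assms(2) by simp
  have "a \<bullet> w = 0" unfolding w_def k_def using aa
    by (simp add: inner_diff_right inner_commute)
  then have "w \<in> span \<tau>" using hyperplane_span[OF assms(1-3)] by blast
  moreover have "span \<tau> \<subseteq> {x. h \<bullet> x = 0}"
    by (rule span_minimal) (use assms(4) subspace_hyperplane in auto)
  ultimately have "h \<bullet> w = 0" by blast
  then have "w \<bullet> w = 0" using \<open>a \<bullet> w = 0\<close> unfolding w_def
    by (simp add: inner_diff_left inner_commute)
  then have "w = 0" by simp
  then show ?thesis unfolding w_def k_def by simp
qed

lemma sign_aux1: "(s::real) = 1 \<or> s = -1 \<Longrightarrow> s * k > 0 \<Longrightarrow> k * y \<le> 0 \<Longrightarrow> s * y \<le> 0"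
  by (auto simp: mult_le_0_iff)

lemma sign_aux2: "(s::real) = 1 \<or> s = -1 \<Longrightarrow> s * k > 0 \<Longrightarrow> s * y \<le> 0 \<Longrightarrow> k * y \<le> 0"
  by (auto simp: mult_le_0_iff)

lemma codim1_facts:
  fixes \<Sigma> :: "(real^'d) set set"
  assumes "\<tau> \<in> codim1 \<Sigma>"
  shows "\<tau> \<in> \<Sigma>" "dim \<tau> = CARD('d) - 1" "dim \<tau> < CARD('d)"
  using assms unfolding codim1_def cones_dim_def by auto

lemma side:
  fixes \<Sigma> :: "(real^'d) set set"
  assumes fan: "is_fan \<Sigma>" and \<tau>: "\<tau> \<in> codim1 \<Sigma>" and \<sigma>: "\<sigma> \<in> cones_dim \<Sigma> CARD('d)"
    and sub: "\<tau> \<subseteq> \<sigma>" and p: "p \<in> rel_interior \<tau>"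
  shows "\<exists>s::real. (s = 1 \<or> s = -1) \<and> (\<exists>e>0. (\<forall>x\<in>\<sigma>. s * (normal_of \<tau> \<bullet> x) \<le> 0)
           \<and> (\<forall>x. dist p x < e \<and> s * (normal_of \<tau> \<bullet> x) \<le> 0 \<longrightarrow> x \<in> \<sigma>))"
proof -
  define a where "a = normal_of \<tau>"
  have \<tau>S: "\<tau> \<in> \<Sigma>" and d\<tau>: "dim \<tau> = CARD('d) - 1" "dim \<tau> < CARD('d)"
    using codim1_facts[OF \<tau>] by auto
  have \<sigma>S: "\<sigma> \<in> \<Sigma>" and d\<sigma>: "dim \<sigma> = CARD('d)" using \<sigma> unfolding cones_dim_def by auto
  have a: "a \<noteq> 0" "\<forall>v\<in>\<tau>. a \<bullet> v = 0" using normal_of_prop[OF d\<tau>(2)] a_def by auto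
  have p\<tau>: "p \<in> \<tau>" using p rel_interior_subset by blast
  have p\<sigma>: "p \<in> \<sigma>" using p\<tau> sub by blast
  have "(\<tau> \<inter> \<sigma>) face_of \<sigma>" using fan \<tau>S \<sigma>S unfolding is_fan_def by blast
  then have face: "\<tau> face_of \<sigma>" using sub by (simp add: Int_absorb2)
  have poly: "polyhedron \<sigma>" using fan \<sigma>S fan_cone cone_polyhedron by blast
  then have conv: "convex \<sigma>" by (rule polyhedron_imp_convex)
  have z\<tau>: "0 \<in> \<tau>" using fan \<tau>S fan_cone cone_0 by blast
  obtain F where F: "finite F" "\<sigma> = \<Inter>F" "\<forall>h\<in>F. \<exists>g b. g \<noteq> 0 \<and> h = {x. g \<bullet> x \<le> b}"
    using poly unfolding polyhedron_def by blast
  from F(3) have HQ: "\<forall>h\<in>F. \<exists>q. fst q \<noteq> 0 \<and> h = {x. fst q \<bullet> x \<le> snd q}" by auto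
  obtain Q where Q: "\<forall>h\<in>F. fst (Q h) \<noteq> 0 \<and> h = {x. fst (Q h) \<bullet> x \<le> snd (Q h)}"
    using bchoice[OF HQ] by blast
  define G where "G h = fst (Q h)" for h
  define B where "B h = snd (Q h)" for h
  have GB: "\<forall>h\<in>F. G h \<noteq> 0 \<and> h = {x. G h \<bullet> x \<le> B h}" unfolding G_def B_def using Q by blast
  have mem\<sigma>: "x \<in> \<sigma> \<longleftrightarrow> (\<forall>h\<in>F. G h \<bullet> x \<le> B h)" for x
  proof -
    have "x \<in> \<sigma> \<longleftrightarrow> (\<forall>h\<in>F. x \<in> h)" using F(2) by auto
    also have "\<dots> \<longleftrightarrow> (\<forall>h\<in>F. G h \<bullet> x \<le> B h)"
    proof (intro ball_cong refl)
      fix h assume "h \<in> F"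
      then have E: "h = {y. G h \<bullet> y \<le> B h}" using GB by blast
      have "x \<in> h \<longleftrightarrow> x \<in> {y. G h \<bullet> y \<le> B h}" by (simp only: E[symmetric])
      then show "x \<in> h \<longleftrightarrow> G h \<bullet> x \<le> B h" by simp
    qed
    finally show ?thesis .
  qed
  define A where "A = {h\<in>F. G h \<bullet> p = B h}"
  have act: "\<forall>v\<in>\<tau>. G h \<bullet> v = B h" if h: "h \<in> A" for h
  proof -
    have hF: "h \<in> F" using h A_def by auto
    have f2: "(\<sigma> \<inter> {x. G h \<bullet> x = B h}) face_of \<sigma>"
      by (rule face_of_Int_supporting_hyperplane_le[OF conv]) (use mem\<sigma> hF in auto)
    have "p \<in> (\<sigma> \<inter> {x. G h \<bullet> x = B h}) \<inter> rel_interior \<tau>" using p p\<sigma> h A_def by auto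
    then have "\<tau> \<subseteq> \<sigma> \<inter> {x. G h \<bullet> x = B h}" using subset_of_face_of[OF f2 sub] by blast
    then show ?thesis by auto
  qed
  have B0: "B h = 0" if "h \<in> A" for h using act[OF that] z\<tau> by (metis inner_zero_right)
  define k where "k h = (G h \<bullet> a) / (a \<bullet> a)" for h
  have Gk: "G h = k h *\<^sub>R a" if "h \<in> A" for h
    unfolding k_def using parallel_normal[OF d\<tau>(1) a(1) a(2)] act[OF that] B0[OF that] by simp
  have kne: "k h \<noteq> 0" if "h \<in> A" for h
  proof -
    have "G h \<noteq> 0" using GB that A_def by blast
    then show ?thesis using Gk[OF that] by auto
  qed
  define Op where "Op = (\<Inter>h\<in>F - A. {x. G h \<bullet> x < B h})"
  have "open Op" unfolding Op_def using F(1) by (intro open_INT) (auto intro: open_halfspace_lt)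
  moreover have "p \<in> Op" unfolding Op_def
  proof
    fix h assume h: "h \<in> F - A"
    then have "G h \<bullet> p \<le> B h" "G h \<bullet> p \<noteq> B h" using mem\<sigma> p\<sigma> A_def by auto
    then show "p \<in> {x. G h \<bullet> x < B h}" by simp
  qed
  ultimately obtain e0 where e0: "e0 > 0" "ball p e0 \<subseteq> Op" using open_contains_ball by blast
  have ballprop: "x \<in> \<sigma>" if xd: "dist p x < e0" and xk: "\<forall>h\<in>A. k h * (a \<bullet> x) \<le> 0" for x
  proof -
    have xO: "x \<in> Op" using e0(2) xd by (auto simp: mem_ball)
    have "G h \<bullet> x \<le> B h" if hF: "h \<in> F" for h
    proof (cases "h \<in> A")
      case True
      have "G h \<bullet> x = k h * (a \<bullet> x)" using Gk[OF True] by simp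
      moreover have "k h * (a \<bullet> x) \<le> 0" using xk True by blast
      ultimately show ?thesis using B0[OF True] by simp
    next
      case False
      then have "h \<in> F - A" using hF by blast
      then have "G h \<bullet> x < B h" using xO unfolding Op_def by blast
      then show ?thesis by simp
    qed
    then show ?thesis using mem\<sigma>[of x] by blast
  qed
  have Ane: "A \<noteq> {}"
  proof
    assume A0: "A = {}"
    define t where "t = e0 / (2 * norm a)"
    have t: "t > 0" using e0 a(1) t_def by simp
    define y1 where "y1 = p + t *\<^sub>R a"
    define y2 where "y2 = p - t *\<^sub>R a"
    have "dist p y1 = e0 / 2" "dist p y2 = e0 / 2"
      using a(1) t e0(1) unfolding y1_def y2_def t_def dist_norm by auto
    then have "y1 \<in> \<sigma>" "y2 \<in> \<sigma>" using ballprop A0 e0 by auto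
    moreover have "p \<in> open_segment y1 y2"
    proof -
      have "y1 + y2 = 2 *\<^sub>R p" unfolding y1_def y2_def scaleR_2 by simp
      then have "midpoint y1 y2 = p" unfolding midpoint_def by simp
      moreover have "y1 \<noteq> y2"
      proof
        assume "y1 = y2"
        moreover have "y1 - y2 = (t + t) *\<^sub>R a" unfolding y1_def y2_def scaleR_left_distrib by (simp only: diff_diff_eq2 add.assoc add_diff_cancel_left')
        ultimately have "(t + t) *\<^sub>R a = 0" by simp
        then show False using t a(1) by simp
      qed
      ultimately show ?thesis using midpoint_in_open_segment by metis
    qed
    ultimately have "y1 \<in> \<tau>" using face_ofD[OF face _ _ _ p\<tau>] by blast
    then have "a \<bullet> y1 = 0" using a by blast
    moreover have "a \<bullet> y1 = t * (a \<bullet> a)" using a p\<tau> unfolding y1_def by (simp add: inner_add_right)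
    ultimately show False using t a(1) by simp
  qed
  have constr: "k h * (a \<bullet> x) \<le> 0" if "h \<in> A" "x \<in> \<sigma>" for h x
  proof -
    have hF: "h \<in> F" using that(1) A_def by blast
    have "G h \<bullet> x \<le> B h" using mem\<sigma>[of x] that(2) hF by blast
    moreover have "G h \<bullet> x = k h * (a \<bullet> x)" using Gk[OF that(1)] by simp
    ultimately show ?thesis using B0[OF that(1)] by simp
  qed
  have nomix: "\<not> ((\<exists>h\<in>A. k h > 0) \<and> (\<exists>h\<in>A. k h < 0))"
  proof
    assume "(\<exists>h\<in>A. k h > 0) \<and> (\<exists>h\<in>A. k h < 0)"
    then obtain h1 h2 where h: "h1 \<in> A" "k h1 > 0" "h2 \<in> A" "k h2 < 0" by blast
    have "x \<in> span \<tau>" if "x \<in> \<sigma>" for x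
    proof -
      have "k h1 * (a \<bullet> x) \<le> 0" using constr h(1) that by blast
      then have "a \<bullet> x \<le> 0" using h(2) by (simp add: mult_le_0_iff)
      have "k h2 * (a \<bullet> x) \<le> 0" using constr h(3) that by blast
      then have "a \<bullet> x \<ge> 0" using h(4) by (simp add: mult_le_0_iff)
      then have "a \<bullet> x = 0" using \<open>a \<bullet> x \<le> 0\<close> by simp
      then show ?thesis using hyperplane_span[OF d\<tau>(1) a] by blast
    qed
    then have "dim \<sigma> \<le> dim (span \<tau>)" by (intro dim_subset) auto
    then show False using d\<sigma> d\<tau> by simp
  qed
  define s :: real where "s = (if \<exists>h\<in>A. k h > 0 then 1 else -1)"
  have s: "s = 1 \<or> s = -1" using s_def by auto
  have sk: "s * k h > 0" if "h \<in> A" for h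
  proof (cases "\<exists>h\<in>A. k h > 0")
    case True
    have "k h > 0"
    proof (rule ccontr)
      assume "\<not> k h > 0"
      then have "k h < 0" using kne[OF that] by simp
      then show False using nomix True that by blast
    qed
    then show ?thesis using True s_def by simp
  next
    case False
    then have "\<not> k h > 0" using that by blast
    then have "k h < 0" using kne[OF that] by simp
    then show ?thesis using False s_def by simp
  qed
  obtain h0 where h0: "h0 \<in> A" using Ane by blast
  have L1: "\<forall>x\<in>\<sigma>. s * (a \<bullet> x) \<le> 0"
  proof
    fix x assume that: "x \<in> \<sigma>"
    have "k h0 * (a \<bullet> x) \<le> 0" using constr h0 that by blast
    then show "s * (a \<bullet> x) \<le> 0" using sign_aux1[OF s sk[OF h0]] by blast
  qed
  have L2: "\<forall>x. dist p x < e0 \<and> s * (a \<bullet> x) \<le> 0 \<longrightarrow> x \<in> \<sigma>"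
  proof (intro allI impI)
    fix x assume xx: "dist p x < e0 \<and> s * (a \<bullet> x) \<le> 0"
    have "\<forall>h\<in>A. k h * (a \<bullet> x) \<le> 0"
    proof
      fix h assume "h \<in> A"
      show "k h * (a \<bullet> x) \<le> 0" by (rule sign_aux2[OF s sk[OF \<open>h \<in> A\<close>]]) (use xx in simp)
    qed
    then show "x \<in> \<sigma>" by (rule ballprop[rotated]) (use xx in blast)
  qed
  have L3: "\<exists>e>0. (\<forall>x\<in>\<sigma>. s * (a \<bullet> x) \<le> 0) \<and> (\<forall>x. dist p x < e \<and> s * (a \<bullet> x) \<le> 0 \<longrightarrow> x \<in> \<sigma>)"
    by (rule exI[of _ e0], intro conjI e0(1) L1 L2)
  have L4: "\<exists>s::real. (s = 1 \<or> s = -1) \<and> (\<exists>e>0. (\<forall>x\<in>\<sigma>. s * (a \<bullet> x) \<le> 0) \<and> (\<forall>x. dist p x < e \<and> s * (a \<bullet> x) \<le> 0 \<longrightarrow> x \<in> \<sigma>))"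
    by (rule exI[of _ s], intro conjI s L3)
  then show ?thesis by (simp only: a_def)
qed

lemma inc_side:
  fixes \<Sigma> :: "(real^'d) set set"
  assumes fan: "is_fan \<Sigma>" and \<tau>: "\<tau> \<in> codim1 \<Sigma>" and sub: "\<tau> \<subseteq> \<sigma>" and p: "p \<in> rel_interior \<tau>"
    and s: "s = 1 \<or> s = -1" and e: "e > 0"
    and L1: "\<forall>x\<in>\<sigma>. s * (normal_of \<tau> \<bullet> x) \<le> 0"
    and L2: "\<forall>x. dist p x < e \<and> s * (normal_of \<tau> \<bullet> x) \<le> 0 \<longrightarrow> x \<in> \<sigma>"
  shows "real_of_int (incidence \<sigma> \<tau>) = s"
proof -
  define a where "a = normal_of \<tau>"
  have a: "a \<noteq> 0" "\<forall>v\<in>\<tau>. a \<bullet> v = 0" using normal_of_prop[OF codim1_facts(3)[OF \<tau>]] a_def by auto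
  have p\<tau>: "p \<in> \<tau>" using p rel_interior_subset by blast
  show ?thesis
  proof (cases "s = 1")
    case True
    then have "\<forall>x\<in>\<sigma>. normal_of \<tau> \<bullet> x \<le> 0" using L1 by simp
    then show ?thesis using sub True unfolding incidence_def by simp
  next
    case False
    then have sm: "s = -1" using s by simp
    define t where "t = e / (2 * norm a)"
    have t: "t > 0" using e a(1) t_def by simp
    define x where "x = p + t *\<^sub>R a"
    have "dist p x = e / 2" using a(1) t e unfolding x_def t_def dist_norm by auto
    moreover have ax: "a \<bullet> x = t * (a \<bullet> a)" using a p\<tau> unfolding x_def by (simp add: inner_add_right)
    moreover have "t * (a \<bullet> a) > 0" using t a(1) by simp
    ultimately have "x \<in> \<sigma>" using L2 sm e unfolding a_def[symmetric] by simp
    moreover have "\<not> normal_of \<tau> \<bullet> x \<le> 0" using ax \<open>t * (a \<bullet> a) > 0\<close> a_def by simp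
    ultimately have "\<not> (\<forall>x\<in>\<sigma>. normal_of \<tau> \<bullet> x \<le> 0)" by blast
    then show ?thesis using sub sm unfolding incidence_def by simp
  qed
qed

lemma inc_pm: "\<delta> \<subseteq> \<sigma> \<Longrightarrow> incidence \<sigma> \<delta> = 1 \<or> incidence \<sigma> \<delta> = -1"
  unfolding incidence_def by simp

lemma opposite:
  fixes \<Sigma> :: "(real^'d) set set"
  assumes fan: "is_fan \<Sigma>" and \<tau>: "\<tau> \<in> codim1 \<Sigma>"
    and s1: "\<sigma>1 \<in> cones_dim \<Sigma> CARD('d)" and s2: "\<sigma>2 \<in> cones_dim \<Sigma> CARD('d)"
    and ne: "\<sigma>1 \<noteq> \<sigma>2" and sub1: "\<tau> \<subseteq> \<sigma>1" and sub2: "\<tau> \<subseteq> \<sigma>2"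
  shows "\<sigma>1 \<inter> \<sigma>2 = \<tau>" "incidence \<sigma>1 \<tau> = - incidence \<sigma>2 \<tau>"
proof -
  have \<tau>S: "\<tau> \<in> \<Sigma>" and d\<tau>: "dim \<tau> = CARD('d) - 1" "dim \<tau> < CARD('d)"
    using codim1_facts[OF \<tau>] by auto
  have S1: "\<sigma>1 \<in> \<Sigma>" "dim \<sigma>1 = CARD('d)" using s1 unfolding cones_dim_def by auto
  have S2: "\<sigma>2 \<in> \<Sigma>" "dim \<sigma>2 = CARD('d)" using s2 unfolding cones_dim_def by auto
  define G where "G = \<sigma>1 \<inter> \<sigma>2"
  have Gf: "G face_of \<sigma>1" using fan S1(1) S2(1) unfolding is_fan_def G_def by blast
  have z\<tau>: "0 \<in> \<tau>" using fan \<tau>S fan_cone cone_0 by blast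
  have \<tau>G: "\<tau> \<subseteq> G" using sub1 sub2 G_def by blast
  then have "G \<noteq> {}" using z\<tau> by blast
  then have GS: "G \<in> \<Sigma>" using fan S1(1) Gf unfolding is_fan_def by blast
  have G1: "G \<subseteq> \<sigma>1" using G_def by blast
  have "G \<noteq> \<sigma>1"
  proof
    assume "G = \<sigma>1"
    then have "\<sigma>1 \<subseteq> \<sigma>2" using G_def by blast
    then have "\<sigma>1 = \<sigma>2" using fan_same_dim[OF fan S2(1) S1(1)] S1(2) S2(2) by simp
    then show False using ne by simp
  qed
  then have "\<not> dim \<sigma>1 \<le> dim G" using fan_same_dim[OF fan S1(1) GS G1] by blast
  then have "dim G \<le> dim \<tau>" using S1(2) d\<tau> by simp
  then show I: "\<sigma>1 \<inter> \<sigma>2 = \<tau>" using fan_same_dim[OF fan GS \<tau>S \<tau>G] G_def by simp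
  have conv: "convex \<tau>" using fan \<tau>S fan_cone cone_polyhedron polyhedron_imp_convex by blast
  then have "rel_interior \<tau> \<noteq> {}" using z\<tau> rel_interior_eq_empty by blast
  then obtain p where p: "p \<in> rel_interior \<tau>" by blast
  have p\<tau>: "p \<in> \<tau>" using p rel_interior_subset by blast
  define a where "a = normal_of \<tau>"
  have a: "a \<noteq> 0" "\<forall>v\<in>\<tau>. a \<bullet> v = 0" using normal_of_prop[OF d\<tau>(2)] a_def by auto
  obtain c1 e1 where c1: "c1 = 1 \<or> c1 = -1" "e1 > 0" "\<forall>x\<in>\<sigma>1. c1 * (normal_of \<tau> \<bullet> x) \<le> 0"
      "\<forall>x. dist p x < e1 \<and> c1 * (normal_of \<tau> \<bullet> x) \<le> 0 \<longrightarrow> x \<in> \<sigma>1"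
    using side[OF fan \<tau> s1 sub1 p] by blast
  obtain c2 e2 where c2: "c2 = 1 \<or> c2 = -1" "e2 > 0" "\<forall>x\<in>\<sigma>2. c2 * (normal_of \<tau> \<bullet> x) \<le> 0"
      "\<forall>x. dist p x < e2 \<and> c2 * (normal_of \<tau> \<bullet> x) \<le> 0 \<longrightarrow> x \<in> \<sigma>2"
    using side[OF fan \<tau> s2 sub2 p] by blast
  have i1: "real_of_int (incidence \<sigma>1 \<tau>) = c1" using inc_side[OF fan \<tau> sub1 p c1] .
  have i2: "real_of_int (incidence \<sigma>2 \<tau>) = c2" using inc_side[OF fan \<tau> sub2 p c2] .
  have "c1 \<noteq> c2"
  proof
    assume eq: "c1 = c2"
    define t where "t = min e1 e2 / (2 * norm a)"
    have t: "t > 0" using c1(2) c2(2) a(1) t_def by simp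
    define x where "x = p - (c1 * t) *\<^sub>R a"
    have ac: "\<bar>c1\<bar> = 1" using c1(1) by auto
    have "dist p x = \<bar>c1 * t\<bar> * norm a" unfolding x_def dist_norm by simp
    also have "\<dots> = t * norm a" using ac t by (simp add: abs_mult)
    also have "\<dots> = min e1 e2 / 2" using a(1) unfolding t_def by simp
    finally have dx: "dist p x < e1" "dist p x < e2" using c1(2) c2(2) by auto
    have ax: "a \<bullet> x = - (c1 * t) * (a \<bullet> a)" using a p\<tau> unfolding x_def by (simp add: inner_diff_right)
    have cc: "c1 * c1 = 1" using c1(1) by auto
    have "c1 * (a \<bullet> x) = - (c1 * c1) * t * (a \<bullet> a)" using ax by (simp add: algebra_simps)
    then have cax: "c1 * (a \<bullet> x) = - t * (a \<bullet> a)" using cc by simp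
    have "t * (a \<bullet> a) > 0" using t a(1) by simp
    then have "c1 * (normal_of \<tau> \<bullet> x) \<le> 0" "c2 * (normal_of \<tau> \<bullet> x) \<le> 0"
      using cax eq a_def by simp_all
    then have "x \<in> \<sigma>1" "x \<in> \<sigma>2" using c1(4) c2(4) dx by blast+
    then have "x \<in> \<tau>" using I by blast
    then have "a \<bullet> x = 0" using a by blast
    then have "c1 * (a \<bullet> x) = 0" by simp
    then show False using cax \<open>t * (a \<bullet> a) > 0\<close> by linarith
  qed
  then have "c1 = - c2" using c1(1) c2(1) by auto
  then have "real_of_int (incidence \<sigma>1 \<tau>) = real_of_int (- incidence \<sigma>2 \<tau>)" using i1 i2 by simp
  then show "incidence \<sigma>1 \<tau> = - incidence \<sigma>2 \<tau>" by linarith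
qed

lemma dvd_inc:
  fixes y :: "'d spoly"
  assumes "i = 1 \<or> i = -1"
  shows "g dvd (of_int i * y) \<longleftrightarrow> g dvd y"
  using assms by (auto simp: dvd_minus_iff)

lemma main_facts:
  fixes \<Sigma> :: "(real^'d) set set" and \<alpha> :: "(real^'d) set \<Rightarrow> int"
  assumes fan: "is_fan \<Sigma>" and pure: "pure_fan \<Sigma>"
  shows disj: "cones_dim \<Sigma> CARD('d) \<inter> sigma_neg \<Sigma> \<alpha> = {}"
    and dtop: "d_top \<Sigma> \<alpha> F \<delta> = (\<Sum>\<sigma>\<in>{\<sigma>\<in>cones_dim \<Sigma> CARD('d). \<delta> \<subseteq> \<sigma>}. of_int (incidence \<sigma> \<delta>) * F \<sigma>)"
    and fin: "finite {\<sigma>\<in>cones_dim \<Sigma> CARD('d). \<delta> \<subseteq> \<sigma>}"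
proof -
  show D: "cones_dim \<Sigma> CARD('d) \<inter> sigma_neg \<Sigma> \<alpha> = {}"
  proof (rule ccontr)
    assume "cones_dim \<Sigma> CARD('d) \<inter> sigma_neg \<Sigma> \<alpha> \<noteq> {}"
    then obtain \<gamma> \<tau> where g: "\<gamma> \<in> cones_dim \<Sigma> CARD('d)" "\<tau> \<in> codim1 \<Sigma>" "\<gamma> \<subseteq> \<tau>"
      unfolding sigma_neg_def by blast
    have "dim \<gamma> \<le> dim \<tau>" using g(3) by (rule dim_subset)
    then show False using g(1) codim1_facts(3)[OF g(2)] unfolding cones_dim_def by simp
  qed
  have finC: "finite (cones_dim \<Sigma> CARD('d))" using fan unfolding is_fan_def cones_dim_def by simp
  then show "finite {\<sigma>\<in>cones_dim \<Sigma> CARD('d). \<delta> \<subseteq> \<sigma>}" by simp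
  have "cones_dim \<Sigma> CARD('d) - sigma_neg \<Sigma> \<alpha> = cones_dim \<Sigma> CARD('d)" using D by blast
  then have "d_top \<Sigma> \<alpha> F \<delta> = (\<Sum>\<sigma>\<in>cones_dim \<Sigma> CARD('d). of_int (incidence \<sigma> \<delta>) * F \<sigma>)"
    unfolding d_top_def by simp
  also have "\<dots> = (\<Sum>\<sigma>\<in>{\<sigma>\<in>cones_dim \<Sigma> CARD('d). \<delta> \<subseteq> \<sigma>}. of_int (incidence \<sigma> \<delta>) * F \<sigma>)"
    by (rule sum.mono_neutral_right[OF finC]) (auto simp: incidence_def)
  finally show "d_top \<Sigma> \<alpha> F \<delta> = (\<Sum>\<sigma>\<in>{\<sigma>\<in>cones_dim \<Sigma> CARD('d). \<delta> \<subseteq> \<sigma>}. of_int (incidence \<sigma> \<delta>) * F \<sigma>)" .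
qed

lemma codim1_eq:
  fixes \<Sigma> :: "(real^'d) set set"
  assumes fan: "is_fan \<Sigma>" and "\<delta> \<in> codim1 \<Sigma>" "\<tau> \<in> codim1 \<Sigma>" "\<delta> \<subseteq> \<tau>"
  shows "\<delta> = \<tau>"
  using fan_same_dim[OF fan codim1_facts(1)[OF assms(3)] codim1_facts(1)[OF assms(2)] assms(4)]
    codim1_facts(2)[OF assms(2)] codim1_facts(2)[OF assms(3)] by simp

lemma Jmem:
  fixes \<Sigma> :: "(real^'d) set set"
  assumes fan: "is_fan \<Sigma>" and pure: "pure_fan \<Sigma>" and \<delta>: "\<delta> \<in> codim1 \<Sigma>" "\<delta> \<notin> sigma_neg \<Sigma> \<alpha>"
  shows "x \<in> Jideal \<Sigma> \<alpha> \<delta> \<longleftrightarrow> gen_pow \<alpha> \<delta> dvd x"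
proof -
  have "\<delta> \<notin> facets \<Sigma>"
  proof
    assume "\<delta> \<in> facets \<Sigma>"
    then have "dim \<delta> = CARD('d)" using facets_full[OF fan pure] unfolding cones_dim_def by auto
    then show False using codim1_facts(3)[OF \<delta>(1)] by simp
  qed
  moreover have "{\<tau>\<in>codim1 \<Sigma> - sigma_neg \<Sigma> \<alpha>. \<delta> \<subseteq> \<tau>} = {\<delta>}"
  proof (rule set_eqI)
    fix \<tau>
    show "\<tau> \<in> {\<tau>\<in>codim1 \<Sigma> - sigma_neg \<Sigma> \<alpha>. \<delta> \<subseteq> \<tau>} \<longleftrightarrow> \<tau> \<in> {\<delta>}"
    proof
      assume "\<tau> \<in> {\<tau>\<in>codim1 \<Sigma> - sigma_neg \<Sigma> \<alpha>. \<delta> \<subseteq> \<tau>}"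
      then have "\<tau> \<in> codim1 \<Sigma>" "\<delta> \<subseteq> \<tau>" by auto
      then have "\<delta> = \<tau>" by (rule codim1_eq[OF fan \<delta>(1)])
      then show "\<tau> \<in> {\<delta>}" by simp
    next
      assume "\<tau> \<in> {\<delta>}"
      then show "\<tau> \<in> {\<tau>\<in>codim1 \<Sigma> - sigma_neg \<Sigma> \<alpha>. \<delta> \<subseteq> \<tau>}" using \<delta> by simp
    qed
  qed
  ultimately have J: "Jideal \<Sigma> \<alpha> \<delta> = {q \<delta> * gen_pow \<alpha> \<delta> | q. True}"
    unfolding Jideal_def by simp
  show ?thesis
  proof
    assume "x \<in> Jideal \<Sigma> \<alpha> \<delta>"
    then have "\<exists>q. x = q \<delta> * gen_pow \<alpha> \<delta>" unfolding J by simp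
    then obtain q where "x = q \<delta> * gen_pow \<alpha> \<delta>" by blast
    then show "gen_pow \<alpha> \<delta> dvd x" by simp
  next
    assume "gen_pow \<alpha> \<delta> dvd x"
    then obtain k where "x = gen_pow \<alpha> \<delta> * k" by (rule dvdE)
    then have "x = (\<lambda>_. k) \<delta> * gen_pow \<alpha> \<delta>" by (simp add: mult.commute)
    then show "x \<in> Jideal \<Sigma> \<alpha> \<delta>" unfolding J by (intro CollectI exI[of _ "\<lambda>_. k"]) simp
  qed
qed

lemma gp1:
  fixes \<Sigma> :: "(real^'d) set set"
  assumes fan: "is_fan \<Sigma>" and \<delta>: "\<delta> \<in> codim1 \<Sigma>" "\<delta> \<in> sigma_neg \<Sigma> \<alpha>"
  shows "gen_pow \<alpha> \<delta> = 1"
proof -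
  obtain \<tau> where t: "\<tau> \<in> codim1 \<Sigma>" "\<alpha> \<tau> = -1" "\<delta> \<subseteq> \<tau>" using \<delta>(2) unfolding sigma_neg_def by blast
  have "\<delta> = \<tau>" by (rule codim1_eq[OF fan \<delta>(1) t(1) t(3)])
  then have "\<alpha> \<delta> = -1" using t(2) by simp
  then show ?thesis unfolding gen_pow_def by simp
qed

lemma bdry_iff:
  fixes \<Sigma> :: "(real^'d) set set"
  assumes fan: "is_fan \<Sigma>" and pure: "pure_fan \<Sigma>" and \<delta>: "\<delta> \<in> codim1 \<Sigma>"
  shows "\<delta> \<in> bdry \<Sigma> \<longleftrightarrow> card {\<sigma>\<in>cones_dim \<Sigma> CARD('d). \<delta> \<subseteq> \<sigma>} = 1"
proof
  assume "\<delta> \<in> bdry \<Sigma>"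
  then obtain \<tau> where t: "\<tau> \<in> codim1 \<Sigma>" "card {\<sigma>\<in>facets \<Sigma>. \<tau> \<subseteq> \<sigma>} = 1" "\<delta> \<subseteq> \<tau>"
    unfolding bdry_def by blast
  have "\<delta> = \<tau>" by (rule codim1_eq[OF fan \<delta> t(1) t(3)])
  then show "card {\<sigma>\<in>cones_dim \<Sigma> CARD('d). \<delta> \<subseteq> \<sigma>} = 1"
    using t(2) facets_full[OF fan pure] by simp
next
  assume "card {\<sigma>\<in>cones_dim \<Sigma> CARD('d). \<delta> \<subseteq> \<sigma>} = 1"
  then have "card {\<sigma>\<in>facets \<Sigma>. \<delta> \<subseteq> \<sigma>} = 1" using facets_full[OF fan pure] by simp
  then show "\<delta> \<in> bdry \<Sigma>" using \<delta> codim1_facts(1)[OF \<delta>] unfolding bdry_def by blast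
qed

lemma two_facets:
  fixes \<Sigma> :: "(real^'d) set set"
  assumes fan: "is_fan \<Sigma>" and \<delta>: "\<delta> \<in> codim1 \<Sigma>"
    and s1: "\<sigma>1 \<in> {\<sigma>\<in>cones_dim \<Sigma> CARD('d). \<delta> \<subseteq> \<sigma>}" and s2: "\<sigma>2 \<in> {\<sigma>\<in>cones_dim \<Sigma> CARD('d). \<delta> \<subseteq> \<sigma>}"
    and ne: "\<sigma>1 \<noteq> \<sigma>2"
  shows "{\<sigma>\<in>cones_dim \<Sigma> CARD('d). \<delta> \<subseteq> \<sigma>} = {\<sigma>1, \<sigma>2}"
    and "\<sigma>1 \<inter> \<sigma>2 = \<delta>" and "incidence \<sigma>1 \<delta> = - incidence \<sigma>2 \<delta>"
proof -
  have A1: "\<sigma>1 \<in> cones_dim \<Sigma> CARD('d)" "\<delta> \<subseteq> \<sigma>1" using s1 by auto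
  have A2: "\<sigma>2 \<in> cones_dim \<Sigma> CARD('d)" "\<delta> \<subseteq> \<sigma>2" using s2 by auto
  show "\<sigma>1 \<inter> \<sigma>2 = \<delta>" using opposite(1)[OF fan \<delta> A1(1) A2(1) ne A1(2) A2(2)] .
  show inc12: "incidence \<sigma>1 \<delta> = - incidence \<sigma>2 \<delta>" using opposite(2)[OF fan \<delta> A1(1) A2(1) ne A1(2) A2(2)] .
  show "{\<sigma>\<in>cones_dim \<Sigma> CARD('d). \<delta> \<subseteq> \<sigma>} = {\<sigma>1, \<sigma>2}"
  proof
    show "{\<sigma>1, \<sigma>2} \<subseteq> {\<sigma>\<in>cones_dim \<Sigma> CARD('d). \<delta> \<subseteq> \<sigma>}" using s1 s2 by blast
    show "{\<sigma>\<in>cones_dim \<Sigma> CARD('d). \<delta> \<subseteq> \<sigma>} \<subseteq> {\<sigma>1, \<sigma>2}"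
    proof
      fix \<sigma>3 assume s3: "\<sigma>3 \<in> {\<sigma>\<in>cones_dim \<Sigma> CARD('d). \<delta> \<subseteq> \<sigma>}"
      show "\<sigma>3 \<in> {\<sigma>1, \<sigma>2}"
      proof (rule ccontr)
        assume "\<sigma>3 \<notin> {\<sigma>1, \<sigma>2}"
        then have n1: "\<sigma>3 \<noteq> \<sigma>1" and n2: "\<sigma>3 \<noteq> \<sigma>2" by auto
        have A3: "\<sigma>3 \<in> cones_dim \<Sigma> CARD('d)" "\<delta> \<subseteq> \<sigma>3" using s3 by auto
        have "incidence \<sigma>3 \<delta> = - incidence \<sigma>1 \<delta>" using opposite(2)[OF fan \<delta> A3(1) A1(1) n1 A3(2) A1(2)] .
        moreover have "incidence \<sigma>3 \<delta> = - incidence \<sigma>2 \<delta>" using opposite(2)[OF fan \<delta> A3(1) A2(1) n2 A3(2) A2(2)] .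
        ultimately have "incidence \<sigma>1 \<delta> = 0" using inc12 by simp
        then show False using inc_pm[OF A1(2)] by simp
      qed
    qed
  qed
qed

theorem lemma3p7:
  fixes \<Sigma> :: "(real^'d) set set" and \<alpha> :: "(real^'d) set \<Rightarrow> int"
  assumes "is_fan \<Sigma>"
    and "pure_fan \<Sigma>"
    and "hereditary \<Sigma>"
    and "\<exists>\<sigma>\<in>\<Sigma>. dim \<sigma> = CARD('d)"
    and "smoothness_params \<Sigma> \<alpha>"
  shows "H_top \<Sigma> \<alpha> = spline_module \<Sigma> \<alpha>"
proof -
  note fan = assms(1) and pure = assms(2)
  define S where "S \<delta> = {\<sigma>\<in>cones_dim \<Sigma> CARD('d). \<delta> \<subseteq> \<sigma>}" for \<delta>
  have dt: "d_top \<Sigma> \<alpha> F \<delta> = (\<Sum>\<sigma>\<in>S \<delta>. of_int (incidence \<sigma> \<delta>) * F \<sigma>)" for F \<delta>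
    unfolding S_def by (rule dtop[OF fan pure])
  have D: "cones_dim \<Sigma> CARD('d) \<inter> sigma_neg \<Sigma> \<alpha> = {}" by (rule disj[OF fan pure])
  have K1: "d_top \<Sigma> \<alpha> F \<delta> = of_int (incidence \<sigma> \<delta>) * F \<sigma>" if "S \<delta> = {\<sigma>}" for F \<delta> \<sigma>
    using dt[of F \<delta>] that by simp
  have K2: "d_top \<Sigma> \<alpha> F \<delta> = of_int (incidence \<sigma>1 \<delta>) * (F \<sigma>1 - F \<sigma>2) \<and> \<sigma>1 \<inter> \<sigma>2 = \<delta>"
    if "\<delta> \<in> codim1 \<Sigma>" "\<sigma>1 \<in> S \<delta>" "\<sigma>2 \<in> S \<delta>" "\<sigma>1 \<noteq> \<sigma>2" for F \<delta> \<sigma>1 \<sigma>2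
  proof -
    have T: "S \<delta> = {\<sigma>1, \<sigma>2}" "\<sigma>1 \<inter> \<sigma>2 = \<delta>" "incidence \<sigma>1 \<delta> = - incidence \<sigma>2 \<delta>"
      using two_facets[OF fan that(1) _ _ that(4)] that(2,3) unfolding S_def by blast+
    have "d_top \<Sigma> \<alpha> F \<delta> = of_int (incidence \<sigma>1 \<delta>) * F \<sigma>1 + of_int (incidence \<sigma>2 \<delta>) * F \<sigma>2"
      using dt[of F \<delta>] T(1) that(4) by simp
    also have "\<dots> = of_int (incidence \<sigma>1 \<delta>) * (F \<sigma>1 - F \<sigma>2)"
    proof -
      have "incidence \<sigma>2 \<delta> = - incidence \<sigma>1 \<delta>" using T(3) by simp
      then show ?thesis by (simp add: right_diff_distrib)
    qed
    finally show ?thesis using T(2) by blast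
  qed
  have memS: "\<sigma> \<in> S \<delta> \<longleftrightarrow> \<sigma> \<in> cones_dim \<Sigma> CARD('d) \<and> \<delta> \<subseteq> \<sigma>" for \<sigma> \<delta>
    unfolding S_def by simp
  show ?thesis
  proof
    show "H_top \<Sigma> \<alpha> \<subseteq> spline_module \<Sigma> \<alpha>"
    proof
      fix F assume F: "F \<in> H_top \<Sigma> \<alpha>"
      have FH: "F \<in> top_chains \<Sigma> \<alpha> \<and> (\<forall>\<delta>\<in>codim1 \<Sigma> - sigma_neg \<Sigma> \<alpha>. d_top \<Sigma> \<alpha> F \<delta> \<in> Jideal \<Sigma> \<alpha> \<delta>)"
        using F unfolding H_top_def mem_Collect_eq .
      have tc: "\<forall>\<gamma>. \<gamma> \<notin> cones_dim \<Sigma> CARD('d) - sigma_neg \<Sigma> \<alpha> \<longrightarrow> F \<gamma> = 0"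
        using FH[THEN conjunct1] unfolding top_chains_def mem_Collect_eq .
      have hk: "\<forall>\<delta>\<in>codim1 \<Sigma> - sigma_neg \<Sigma> \<alpha>. d_top \<Sigma> \<alpha> F \<delta> \<in> Jideal \<Sigma> \<alpha> \<delta>"
        using FH by (rule conjunct2)
      have c1: "\<forall>\<gamma>. \<gamma> \<notin> cones_dim \<Sigma> CARD('d) \<longrightarrow> F \<gamma> = 0" using tc by blast
      have c2: "\<forall>\<sigma>1\<in>cones_dim \<Sigma> CARD('d). \<forall>\<sigma>2\<in>cones_dim \<Sigma> CARD('d). \<forall>\<tau>\<in>codim1 \<Sigma>.
          \<sigma>1 \<inter> \<sigma>2 = \<tau> \<longrightarrow> gen_pow \<alpha> \<tau> dvd (F \<sigma>1 - F \<sigma>2)"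
      proof (intro ballI impI)
        fix \<sigma>1 \<sigma>2 \<tau>
        assume s1: "\<sigma>1 \<in> cones_dim \<Sigma> CARD('d)" and s2: "\<sigma>2 \<in> cones_dim \<Sigma> CARD('d)"
          and t: "\<tau> \<in> codim1 \<Sigma>" and eq: "\<sigma>1 \<inter> \<sigma>2 = \<tau>"
        have ne: "\<sigma>1 \<noteq> \<sigma>2"
        proof
          assume "\<sigma>1 = \<sigma>2"
          then have "\<tau> = \<sigma>1" using eq by simp
          then have "dim \<tau> = CARD('d)" using s1 unfolding cones_dim_def by simp
          then show False using codim1_facts(3)[OF t] by simp
        qed
        have m1: "\<sigma>1 \<in> S \<tau>" and m2: "\<sigma>2 \<in> S \<tau>" using s1 s2 eq memS by blast+
        show "gen_pow \<alpha> \<tau> dvd (F \<sigma>1 - F \<sigma>2)"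
        proof (cases "\<tau> \<in> sigma_neg \<Sigma> \<alpha>")
          case True
          then show ?thesis using gp1[OF fan t True] by simp
        next
          case False
          then have "gen_pow \<alpha> \<tau> dvd d_top \<Sigma> \<alpha> F \<tau>"
            using hk t Jmem[OF fan pure t False] by blast
          then have "gen_pow \<alpha> \<tau> dvd of_int (incidence \<sigma>1 \<tau>) * (F \<sigma>1 - F \<sigma>2)"
            using K2[OF t m1 m2 ne] by simp
          then show ?thesis using dvd_inc[OF inc_pm] m1 memS by blast
        qed
      qed
      have c3: "\<forall>\<sigma>\<in>cones_dim \<Sigma> CARD('d). \<forall>\<tau>\<in>codim1 \<Sigma> \<inter> bdry \<Sigma>.
          \<tau> \<subseteq> \<sigma> \<longrightarrow> gen_pow \<alpha> \<tau> dvd F \<sigma>"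
      proof (intro ballI impI)
        fix \<sigma> \<tau>
        assume s: "\<sigma> \<in> cones_dim \<Sigma> CARD('d)" and tb: "\<tau> \<in> codim1 \<Sigma> \<inter> bdry \<Sigma>" and sub: "\<tau> \<subseteq> \<sigma>"
        have t: "\<tau> \<in> codim1 \<Sigma>" using tb by blast
        show "gen_pow \<alpha> \<tau> dvd F \<sigma>"
        proof (cases "\<tau> \<in> sigma_neg \<Sigma> \<alpha>")
          case True
          then show ?thesis using gp1[OF fan t True] by simp
        next
          case False
          have m: "\<sigma> \<in> S \<tau>" using s sub memS by blast
          have "card (S \<tau>) = 1" using bdry_iff[OF fan pure t] tb unfolding S_def by blast
          then obtain \<sigma>' where "S \<tau> = {\<sigma>'}" by (rule card_1_singletonE)
          then have St: "S \<tau> = {\<sigma>}" using m by simp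
          have "gen_pow \<alpha> \<tau> dvd d_top \<Sigma> \<alpha> F \<tau>"
            using hk t False Jmem[OF fan pure t False] by blast
          then have "gen_pow \<alpha> \<tau> dvd of_int (incidence \<sigma> \<tau>) * F \<sigma>" using K1[OF St] by simp
          then show ?thesis using dvd_inc[OF inc_pm[OF sub]] by blast
        qed
      qed
      show "F \<in> spline_module \<Sigma> \<alpha>" unfolding spline_module_def by (rule CollectI, intro conjI c1 c2 c3)
    qed
  next
    show "spline_module \<Sigma> \<alpha> \<subseteq> H_top \<Sigma> \<alpha>"
    proof
      fix F assume F: "F \<in> spline_module \<Sigma> \<alpha>"
      note Fs = F[unfolded spline_module_def mem_Collect_eq]
      have c1: "\<forall>\<gamma>. \<gamma> \<notin> cones_dim \<Sigma> CARD('d) \<longrightarrow> F \<gamma> = 0"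
        using Fs by (rule conjunct1)
      have c2: "\<forall>\<sigma>1\<in>cones_dim \<Sigma> CARD('d). \<forall>\<sigma>2\<in>cones_dim \<Sigma> CARD('d). \<forall>\<tau>\<in>codim1 \<Sigma>.
          \<sigma>1 \<inter> \<sigma>2 = \<tau> \<longrightarrow> gen_pow \<alpha> \<tau> dvd (F \<sigma>1 - F \<sigma>2)"
        using Fs[THEN conjunct2] by (rule conjunct1)
      have c3: "\<forall>\<sigma>\<in>cones_dim \<Sigma> CARD('d). \<forall>\<tau>\<in>codim1 \<Sigma> \<inter> bdry \<Sigma>.
          \<tau> \<subseteq> \<sigma> \<longrightarrow> gen_pow \<alpha> \<tau> dvd F \<sigma>"
        using Fs[THEN conjunct2] by (rule conjunct2)
      have tc: "F \<in> top_chains \<Sigma> \<alpha>"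
        unfolding top_chains_def
      proof (intro CollectI allI impI)
        fix \<gamma> assume g: "\<gamma> \<notin> cones_dim \<Sigma> CARD('d) - sigma_neg \<Sigma> \<alpha>"
        have "\<gamma> \<notin> cones_dim \<Sigma> CARD('d)"
        proof
          assume "\<gamma> \<in> cones_dim \<Sigma> CARD('d)"
          then have "\<gamma> \<in> sigma_neg \<Sigma> \<alpha>" using g by blast
          then show False using D \<open>\<gamma> \<in> cones_dim \<Sigma> CARD('d)\<close> by blast
        qed
        then show "F \<gamma> = 0" using c1 by blast
      qed
      have hk: "d_top \<Sigma> \<alpha> F \<delta> \<in> Jideal \<Sigma> \<alpha> \<delta>" if d: "\<delta> \<in> codim1 \<Sigma> - sigma_neg \<Sigma> \<alpha>" for \<delta>
      proof -
        have t: "\<delta> \<in> codim1 \<Sigma>" and nn: "\<delta> \<notin> sigma_neg \<Sigma> \<alpha>" using d by auto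
        have "gen_pow \<alpha> \<delta> dvd d_top \<Sigma> \<alpha> F \<delta>"
        proof (cases "S \<delta> = {}")
          case True
          then show ?thesis using dt[of F \<delta>] by simp
        next
          case False
          then obtain \<sigma>1 where m1: "\<sigma>1 \<in> S \<delta>" by blast
          show ?thesis
          proof (cases "\<exists>\<sigma>2\<in>S \<delta>. \<sigma>2 \<noteq> \<sigma>1")
            case True
            then obtain \<sigma>2 where m2: "\<sigma>2 \<in> S \<delta>" and ne: "\<sigma>1 \<noteq> \<sigma>2" by blast
            have k: "d_top \<Sigma> \<alpha> F \<delta> = of_int (incidence \<sigma>1 \<delta>) * (F \<sigma>1 - F \<sigma>2)" "\<sigma>1 \<inter> \<sigma>2 = \<delta>"
              using K2[OF t m1 m2 ne] by blast+
            have "\<sigma>1 \<in> cones_dim \<Sigma> CARD('d)" "\<sigma>2 \<in> cones_dim \<Sigma> CARD('d)" "\<delta> \<subseteq> \<sigma>1"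
              using m1 m2 memS by blast+
            then have "gen_pow \<alpha> \<delta> dvd (F \<sigma>1 - F \<sigma>2)" using c2 t k(2) by blast
            then show ?thesis using k(1) dvd_inc[OF inc_pm[OF \<open>\<delta> \<subseteq> \<sigma>1\<close>]] by simp
          next
            case False
            then have St: "S \<delta> = {\<sigma>1}" using m1 by blast
            then have "card (S \<delta>) = 1" by simp
            then have "\<delta> \<in> bdry \<Sigma>" using bdry_iff[OF fan pure t] unfolding S_def by blast
            moreover have "\<sigma>1 \<in> cones_dim \<Sigma> CARD('d)" "\<delta> \<subseteq> \<sigma>1" using m1 memS by blast+
            ultimately have "gen_pow \<alpha> \<delta> dvd F \<sigma>1" using c3 t by blast
            then show ?thesis using K1[OF St] dvd_inc[OF inc_pm[OF \<open>\<delta> \<subseteq> \<sigma>1\<close>]] by simp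
          qed
        qed
        then show ?thesis using Jmem[OF fan pure t nn] by blast
      qed
      show "F \<in> H_top \<Sigma> \<alpha>" unfolding H_top_def by (rule CollectI, intro conjI tc ballI hk)
    qed
  qed
qed

end
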